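(* Let $\ket{\psi_\mathcal{A}}$ be an antisymmetric vector state in $\mathbb{C}^d\otimes\mathbb{C}^d$ with Schmidt rank strictly larger than two. Then for every $0<p\leq 1/(d_\mathcal{S}+1)$, the state $\sigma = p\,|\psi_\mathcal{A}\rangle\langle\psi_\mathcal{A}| + (1-p)\,P_\mathcal{S}/d_\mathcal{S}$ is PPT entangled.
   Context: $V$ is the swap operator, $P_\mathcal{S}=(\mathbb{1}+V)/2$ and $P_\mathcal{A}=(\mathbb{1}-V)/2$ are the projectors onto the symmetric and antisymmetric subspaces of $\mathbb{C}^d\otimes\mathbb{C}^d$ (with $\mathbb{1}$ the identity operator); $d_\mathcal{S}=d(d+1)/2$. A vector $\ket{\psi_\mathcal{A}}$ is antisymmetric if $P_\mathcal{A}\ket{\psi_\mathcal{A}}=\ket{\psi_\mathcal{A}}$. PPT means the partial transpose is positive semidefinite. *)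

theory Defs
  imports "HOL-Analysis.Analysis"
begin

text \<open>Conventions: the local Hilbert space C^d is complex^'n with d = CARD('n);
  C^d (x) C^d is complex^('n \<times> 'n), with basis vector (i,j) = e_i (x) e_j.\<close>

definition smat :: "complex \<Rightarrow> complex^'m::finite^'k::finite \<Rightarrow> complex^'m^'k" where
  "smat c A = (\<chi> a b. c * A $ a $ b)"

definition swap_op :: "complex^('n::finite \<times> 'n)^('n \<times> 'n)" where
  "swap_op = (\<chi> a b. if b = prod.swap a then 1 else 0)"

definition proj_sym :: "complex^('n::finite \<times> 'n)^('n \<times> 'n)" where
  "proj_sym = smat (1/2) (mat 1 + swap_op)"

definition proj_antisym :: "complex^('n::finite \<times> 'n)^('n \<times> 'n)" where
  "proj_antisym = smat (1/2) (mat 1 - swap_op)"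

definition dim_sym :: "'n::finite itself \<Rightarrow> real" where
  "dim_sym _ = real CARD('n) * (real CARD('n) + 1) / 2"

definition antisymmetric_vec :: "complex^('n::finite \<times> 'n) \<Rightarrow> bool" where
  "antisymmetric_vec \<psi> \<longleftrightarrow> proj_antisym *v \<psi> = \<psi>"

definition schmidt_rank :: "complex^('n::finite \<times> 'n) \<Rightarrow> nat" where
  "schmidt_rank \<psi> = rank (\<chi> i j. \<psi> $ (i, j) :: complex^'n^'n)"

definition ketbra :: "complex^'m::finite \<Rightarrow> complex^'m^'m" where
  "ketbra \<psi> = (\<chi> a b. \<psi> $ a * cnj (\<psi> $ b))"

definition psd :: "complex^'m::finite^'m \<Rightarrow> bool" where
  "psd A \<longleftrightarrow> (\<forall>v. let q = (\<Sum>a\<in>UNIV. \<Sum>b\<in>UNIV. cnj (v $ a) * A $ a $ b * v $ b)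
                     in Im q = 0 \<and> 0 \<le> Re q)"

definition density :: "complex^'m::finite^'m \<Rightarrow> bool" where
  "density A \<longleftrightarrow> psd A \<and> trace A = 1"

definition partial_transpose ::
  "complex^('n::finite \<times> 'n)^('n \<times> 'n) \<Rightarrow> complex^('n \<times> 'n)^('n \<times> 'n)" where
  "partial_transpose A = (\<chi> a b. A $ (fst a, snd b) $ (fst b, snd a))"

definition PPT :: "complex^('n::finite \<times> 'n)^('n \<times> 'n) \<Rightarrow> bool" where
  "PPT A \<longleftrightarrow> psd (partial_transpose A)"

definition tensor_op ::
  "complex^'n::finite^'n \<Rightarrow> complex^'n^'n \<Rightarrow> complex^('n \<times> 'n)^('n \<times> 'n)" where
  "tensor_op R T = (\<chi> a b. R $ fst a $ fst b * T $ snd a $ snd b)"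

definition separable :: "complex^('n::finite \<times> 'n)^('n \<times> 'n) \<Rightarrow> bool" where
  "separable A \<longleftrightarrow> (\<exists>(m::nat) (w::nat \<Rightarrow> real) R T.
      (\<forall>k<m. 0 \<le> w k \<and> density (R k) \<and> density (T k)) \<and> (\<Sum>k<m. w k) = 1 \<and>
      A = (\<Sum>k<m. smat (complex_of_real (w k)) (tensor_op (R k) (T k))))"

definition entangled :: "complex^('n::finite \<times> 'n)^('n \<times> 'n) \<Rightarrow> bool" where
  "entangled A \<longleftrightarrow> density A \<and> \<not> separable A"

end

theory Submission
  imports Defs
begin

definition ip :: "complex^'m::finite \<Rightarrow> complex^'m \<Rightarrow> complex" where
  "ip x y = (\<Sum>a\<in>UNIV. cnj (x$a) * y$a)"

definition sq :: "complex^'m::finite^'m \<Rightarrow> complex^'m \<Rightarrow> complex^'m \<Rightarrow> complex" where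
  "sq A x y = ip x (A *v y)"

lemma psd_sq: "psd A \<longleftrightarrow> (\<forall>v. Im (sq A v v) = 0 \<and> 0 \<le> Re (sq A v v))"
  unfolding psd_def sq_def ip_def matrix_vector_mult_def Let_def
  by (simp add: sum_distrib_left mult.assoc)

lemma ip_add_left: "ip (x + y) z = ip x z + ip y z"
  by (simp add: ip_def distrib_right sum.distrib)
lemma ip_add_right: "ip z (x + y) = ip z x + ip z y"
  by (simp add: ip_def distrib_left sum.distrib)
lemma ip_diff_left: "ip (x - y) z = ip x z - ip y z"
  by (simp add: ip_def left_diff_distrib sum_subtractf)
lemma ip_diff_right: "ip z (x - y) = ip z x - ip z y"
  by (simp add: ip_def right_diff_distrib sum_subtractf)
lemma ip_scale_left: "ip (c *s x) z = cnj c * ip x z"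
  by (simp add: ip_def sum_distrib_left mult_ac)
lemma ip_scale_right: "ip z (c *s x) = c * ip z x"
  by (simp add: ip_def sum_distrib_left mult_ac)
lemma ip_zero_left[simp]: "ip 0 z = 0" by (simp add: ip_def)
lemma ip_zero_right[simp]: "ip z 0 = 0" by (simp add: ip_def)
lemma ip_cnj: "ip y x = cnj (ip x y)"
  by (simp add: ip_def mult.commute)
lemma cnj_mult_self: "cnj z * z = complex_of_real ((cmod z)^2)"
  by (simp add: complex_mult_cnj cmod_power2 mult.commute del: of_real_power)
lemma ip_self: "ip x x = of_real (\<Sum>a\<in>UNIV. (cmod (x$a))^2)"
  unfolding ip_def of_real_sum by (rule sum.cong) (auto simp: cnj_mult_self simp del: of_real_power)
lemma ip_self_eq_0: "ip x x = 0 \<longleftrightarrow> x = 0"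
proof
  assume "ip x x = 0"
  then have "(\<Sum>a\<in>UNIV. (cmod (x$a))^2) = 0" unfolding ip_self of_real_eq_0_iff .
  then have "\<forall>a. (cmod (x$a))^2 = 0" by (simp add: sum_nonneg_eq_0_iff)
  then show "x = 0" by (simp add: vec_eq_iff)
qed simp

lemma mv_add: "A *v (x + y) = A *v x + A *v y"
  by (simp add: matrix_vector_right_distrib)
lemma mv_scale: "A *v (c *s x) = c *s (A *v (x::complex^_))"
  unfolding vec_eq_iff matrix_vector_mult_def
  by (simp add: sum_distrib_left) (intro allI sum.cong refl mult.left_commute)

lemma sq_add_left: "sq A (x + y) z = sq A x z + sq A y z" by (simp add: sq_def ip_add_left)
lemma sq_add_right: "sq A z (x + y) = sq A z x + sq A z y" by (simp add: sq_def ip_add_right mv_add)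
lemma sq_scale_left: "sq A (c *s x) z = cnj c * sq A x z" by (simp add: sq_def ip_scale_left)
lemma sq_scale_right: "sq A z (c *s x) = c * sq A z x" by (simp add: sq_def ip_scale_right mv_scale)

lemma sq_expand: "sq A (x + t *s y) (x + t *s y) =
   sq A x x + t * sq A x y + cnj t * sq A y x + (cnj t * t) * sq A y y"
  by (simp add: sq_add_left sq_add_right sq_scale_left sq_scale_right algebra_simps)

lemma psd_herm:
  assumes "psd A" shows "sq A y x = cnj (sq A x y)"
proof -
  have P: "\<And>v. Im (sq A v v) = 0" using assms psd_sq by blast
  have 1: "Im (sq A x y + sq A y x) = 0"
    using P[of "x + 1 *s y"] P[of x] P[of y] sq_expand[of A x 1 y] by simp
  have 2: "Re (sq A x y - sq A y x) = 0"
    using P[of "x + \<i> *s y"] P[of x] P[of y] sq_expand[of A x "\<i>" y] by simp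
  show ?thesis using 1 2 by (simp add: complex_eq_iff)
qed

lemma psd_Re: "psd A \<Longrightarrow> 0 \<le> Re (sq A v v)" using psd_sq by blast
lemma psd_Im: "psd A \<Longrightarrow> Im (sq A v v) = 0" using psd_sq by blast
lemma psd_real: "psd A \<Longrightarrow> sq A v v = of_real (Re (sq A v v))"
  using psd_Im[of A v] by (simp add: complex_eq_iff)

lemma psd_CS:
  assumes "psd A"
  shows "(cmod (sq A x y))^2 \<le> Re (sq A x x) * Re (sq A y y)"
proof -
  define \<beta> where "\<beta> = sq A x y"
  have h: "sq A y x = cnj \<beta>" unfolding \<beta>_def by (rule psd_herm[OF assms])
  have key: "0 \<le> Re (sq A x x) - 2 * s * (cmod \<beta>)^2 + s^2 * (cmod \<beta>)^2 * Re (sq A y y)" for s :: real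
  proof -
    obtain r where r: "sq A y y = of_real r" using psd_real[OF assms, of y] by blast
    have "0 \<le> Re (sq A (x + (- of_real s * cnj \<beta>) *s y) (x + (- of_real s * cnj \<beta>) *s y))"
      using psd_Re[OF assms] by blast
    also have "\<dots> = Re (sq A x x + (- of_real s * cnj \<beta>) * \<beta> + cnj (- of_real s * cnj \<beta>) * cnj \<beta>
        + (cnj (- of_real s * cnj \<beta>) * (- of_real s * cnj \<beta>)) * of_real r)"
      unfolding sq_expand h \<beta>_def[symmetric] r ..
    also have "\<dots> = Re (sq A x x) - 2 * s * (cmod \<beta>)^2 + s^2 * (cmod \<beta>)^2 * r"
      by (simp add: cmod_power2 del: Re_complex_of_real, simp add: power2_eq_square algebra_simps)
    finally show ?thesis using r by simp
  qed
  show ?thesis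
  proof (cases "Re (sq A y y) = 0")
    case True
    show ?thesis
    proof (rule ccontr)
      assume "\<not> ?thesis"
      then have b: "(cmod \<beta>)^2 > 0" using True \<beta>_def by simp
      have "0 \<le> Re (sq A x x) - 2 * ((Re (sq A x x) + 1) / (2 * (cmod \<beta>)^2)) * (cmod \<beta>)^2"
        using key[of "(Re (sq A x x) + 1) / (2 * (cmod \<beta>)^2)"] True by simp
      also have "\<dots> = -1" using b by (simp add: field_simps)
      finally show False by simp
    qed
  next
    case False
    then have q: "Re (sq A y y) > 0" using psd_Re[OF assms, of y] by simp
    have "0 \<le> Re (sq A x x) - 2 * (1 / Re (sq A y y)) * (cmod \<beta>)^2 + (1 / Re (sq A y y))^2 * (cmod \<beta>)^2 * Re (sq A y y)"
      by (rule key[of "1 / Re (sq A y y)"])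
    also have "\<dots> = Re (sq A x x) - (cmod \<beta>)^2 / Re (sq A y y)"
      using q by (simp add: field_simps power2_eq_square)
    finally have "(cmod \<beta>)^2 / Re (sq A y y) \<le> Re (sq A x x)" by simp
    then have "(cmod \<beta>)^2 \<le> Re (sq A x x) * Re (sq A y y)" using q by (simp add: divide_le_eq)
    then show ?thesis using \<beta>_def by simp
  qed
qed

lemma psd_zero_form:
  assumes "psd A" "Re (sq A x x) = 0" shows "A *v x = 0"
proof -
  have "(cmod (sq A y x))^2 \<le> 0" for y
    using psd_CS[OF assms(1), of y x] assms(2) by simp
  from this[of "A *v x"] have "sq A (A *v x) x = 0" by simp
  then show ?thesis by (simp add: sq_def ip_self_eq_0)
qed


lemma mv_axis: "(A *v axis b 1) $ a = A$a$(b::'m::finite)" for A :: "complex^'m^'k::finite"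
  by (simp add: matrix_vector_mult_def axis_def if_distrib cong: if_cong)

lemma ip_axis: "ip (axis a 1) y = y $ a"
proof -
  have "\<And>aa. cnj (axis a 1 $ aa) * y $ aa = (if aa = a then y$a else 0)" by (simp add: axis_def)
  then show ?thesis by (simp add: ip_def)
qed

lemma sq_axis: "sq A (axis a 1) (axis b 1) = A$a$b"
  by (simp add: sq_def ip_axis mv_axis)

lemma sq_axis_left: "sq A (axis a 1) y = (A *v y) $ a"
  by (simp add: sq_def ip_axis)

lemma psd_herm_entry: "psd A \<Longrightarrow> A$b$a = cnj (A$a$b)"
  using psd_herm[of A "axis a 1" "axis b 1"] by (simp add: sq_axis)

lemma sq_mat_add: "sq (A + B) x y = sq A x y + sq B x y"
  by (simp add: sq_def matrix_vector_mult_add_rdistrib ip_add_right)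
lemma sq_mat_diff: "sq (A - B) x y = sq A x y - sq B x y"
  by (simp add: sq_def matrix_vector_mult_diff_rdistrib ip_diff_right)
lemma sq_mat_zero[simp]: "sq 0 x y = 0"
  by (simp add: sq_def)
lemma sq_mat_sum: "sq (\<Sum>i\<in>S. M i) x y = (\<Sum>i\<in>S. sq (M i) x y)"
  by (induct S rule: infinite_finite_induct) (auto simp: sq_mat_add)

lemma smat_mv: "smat c A *v y = c *s (A *v y)"
  by (simp add: smat_def matrix_vector_mult_def vec_eq_iff sum_distrib_left mult.assoc)
lemma sq_smat: "sq (smat c A) x y = c * sq A x y"
  by (simp add: sq_def smat_mv ip_scale_right)

lemma ketbra_mv: "ketbra u *v y = ip u y *s u"
  by (simp add: ketbra_def matrix_vector_mult_def vec_eq_iff ip_def sum_distrib_left mult_ac)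
lemma sq_ketbra: "sq (ketbra u) x y = cnj (ip u x) * ip u y"
  by (simp add: sq_def ketbra_mv ip_scale_right ip_cnj[of x u])
lemma sq_ketbra_self: "sq (ketbra u) x x = of_real ((cmod (ip u x))^2)"
  by (simp add: sq_ketbra cnj_mult_self del: of_real_power)
lemma ketbra_zero[simp]: "ketbra 0 = 0"
  by (simp add: ketbra_def vec_eq_iff)

lemma psd_decomp_aux:
  fixes S :: "'m::finite set"
  shows "\<forall>A::complex^'m^'m. psd A \<and> (\<forall>a j. j \<notin> S \<longrightarrow> A$a$j = 0) \<longrightarrow> (\<exists>f. A = (\<Sum>i\<in>S. ketbra (f i)))"
proof -
  have "finite S" by simp
  then show ?thesis
  proof (induct S rule: finite_induct)
    case empty
    then show ?case by (auto simp: vec_eq_iff)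
  next
    case (insert s S)
    show ?case
    proof (intro allI impI, elim conjE)
      fix A :: "complex^'m^'m"
      assume A: "psd A" and col: "\<forall>a j. j \<notin> insert s S \<longrightarrow> A$a$j = 0"
      define \<alpha> where "\<alpha> = Re (A$s$s)"
      have Ass: "A$s$s = of_real \<alpha>"
        using psd_real[OF A, of "axis s 1"] by (simp add: sq_axis \<alpha>_def)
      have \<alpha>0: "\<alpha> \<ge> 0" using psd_Re[OF A, of "axis s 1"] by (simp add: sq_axis \<alpha>_def)
      show "\<exists>f. A = (\<Sum>i\<in>insert s S. ketbra (f i))"
      proof (cases "\<alpha> = 0")
        case True
        have "A *v axis s 1 = 0" using psd_zero_form[OF A, of "axis s 1"] True
          by (simp add: sq_axis \<alpha>_def)
        then have cs: "A$a$s = 0" for a using mv_axis[of A s a] by simp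
        have "\<forall>a j. j \<notin> S \<longrightarrow> A$a$j = 0"
        proof (intro allI impI)
          fix a j assume "j \<notin> S" then show "A$a$j = 0" by (cases "j = s") (use col cs in auto)
        qed
        then obtain f where f: "A = (\<Sum>i\<in>S. ketbra (f i))" using insert(3) A by blast
        have "(\<Sum>i\<in>insert s S. ketbra ((f(s:=0)) i)) = (\<Sum>i\<in>S. ketbra ((f(s:=0)) i))"
          using insert(1,2) by simp
        also have "\<dots> = (\<Sum>i\<in>S. ketbra (f i))"
          using insert(2) by (intro sum.cong) auto
        finally show ?thesis using f by metis
      next
        case False
        then have \<alpha>p: "\<alpha> > 0" using \<alpha>0 by simp
        define r :: "complex^'m" where "r = (\<chi> a. cnj (A$s$a) / of_real (sqrt \<alpha>))"
        define A' where "A' = A - ketbra r"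
        have herm: "A$a$b = cnj (A$b$a)" for a b using psd_herm_entry[OF A, of b a] by simp
        have kr: "ketbra r $ a $ b = cnj (A$s$a) * A$s$b / of_real \<alpha>" for a b
        proof -
          have "ketbra r $ a $ b = cnj (A$s$a) * A$s$b / (of_real (sqrt \<alpha>) * of_real (sqrt \<alpha>))"
            by (simp add: ketbra_def r_def)
          also have "of_real (sqrt \<alpha>) * of_real (sqrt \<alpha>) = (of_real \<alpha> :: complex)"
            using \<alpha>0 by (simp flip: of_real_mult)
          finally show ?thesis .
        qed
        have ipr: "ip r v = sq A (axis s 1) v / of_real (sqrt \<alpha>)" for v
          by (simp add: ip_def r_def sq_axis_left matrix_vector_mult_def sum_divide_distrib)
        have psdA': "psd A'"
          unfolding psd_sq
        proof
          fix v
          have CS: "(cmod (sq A (axis s 1) v))^2 \<le> \<alpha> * Re (sq A v v)"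
            using psd_CS[OF A, of "axis s 1" v] by (simp add: sq_axis \<alpha>_def)
          have "(cmod (ip r v))^2 = (cmod (sq A (axis s 1) v))^2 / \<alpha>"
            using \<alpha>0 by (simp add: ipr norm_divide power_divide)
          also have "\<dots> \<le> Re (sq A v v)" using CS \<alpha>p by (simp add: divide_le_eq mult.commute)
          finally have le: "(cmod (ip r v))^2 \<le> Re (sq A v v)" .
          have "sq A' v v = sq A v v - of_real ((cmod (ip r v))^2)"
            by (simp add: A'_def sq_mat_diff sq_ketbra_self del: of_real_power)
          then show "Im (sq A' v v) = 0 \<and> 0 \<le> Re (sq A' v v)"
            using le psd_Im[OF A, of v] by simp
        qed
        have colA': "\<forall>a j. j \<notin> S \<longrightarrow> A'$a$j = 0"
        proof (intro allI impI)
          fix a j assume j: "j \<notin> S"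
          show "A'$a$j = 0"
          proof (cases "j = s")
            case True
            have "A'$a$s = A$a$s - cnj (A$s$a) * of_real \<alpha> / of_real \<alpha>"
              by (simp add: A'_def kr Ass)
            also have "\<dots> = 0" using \<alpha>p herm[of a s] by simp
            finally show ?thesis using True by simp
          next
            case False
            then have "A$a$j = 0" "A$s$j = 0" using col j by auto
            then show ?thesis by (simp add: A'_def kr)
          qed
        qed
        obtain f where f: "A' = (\<Sum>i\<in>S. ketbra (f i))" using insert(3) psdA' colA' by blast
        have "(\<Sum>i\<in>insert s S. ketbra ((f(s:=r)) i)) = ketbra r + (\<Sum>i\<in>S. ketbra ((f(s:=r)) i))"
          using insert(1,2) by simp
        also have "(\<Sum>i\<in>S. ketbra ((f(s:=r)) i)) = (\<Sum>i\<in>S. ketbra (f i))"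
          using insert(2) by (intro sum.cong) auto
        also have "ketbra r + \<dots> = A" unfolding f[symmetric] A'_def by simp
        finally show ?thesis by metis
      qed
    qed
  qed
qed

lemma psd_decomp:
  fixes A :: "complex^'m::finite^'m"
  assumes "psd A" shows "\<exists>f. A = (\<Sum>i\<in>(UNIV::'m set). ketbra (f i))"
proof -
  have "\<forall>A::complex^'m^'m. psd A \<longrightarrow> (\<exists>f. A = (\<Sum>i\<in>(UNIV::'m set). ketbra (f i)))"
    using psd_decomp_aux[of "UNIV::'m set"] by simp
  then show ?thesis using assms by blast
qed


lemma sum_pair: "(\<Sum>p\<in>(UNIV::('a::finite\<times>'b::finite) set). g p) = (\<Sum>i\<in>UNIV. \<Sum>j\<in>UNIV. g (i,j))"
  by (simp add: sum.cartesian_product)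

lemma cs_complex:
  fixes a b :: "'k \<Rightarrow> complex"
  shows "(cmod (\<Sum>k\<in>I. a k * b k))^2 \<le> (\<Sum>k\<in>I. (cmod (a k))^2) * (\<Sum>k\<in>I. (cmod (b k))^2)"
proof -
  have "cmod (\<Sum>k\<in>I. a k * b k) \<le> (\<Sum>k\<in>I. cmod (a k) * cmod (b k))"
    by (rule order_trans[OF norm_sum]) (simp add: norm_mult)
  then have "(cmod (\<Sum>k\<in>I. a k * b k))^2 \<le> (\<Sum>k\<in>I. cmod (a k) * cmod (b k))^2"
    by (rule power_mono) simp
  also have "\<dots> \<le> (\<Sum>k\<in>I. (cmod (a k))^2) * (\<Sum>k\<in>I. (cmod (b k))^2)"
    by (rule Cauchy_Schwarz_ineq_sum)
  finally show ?thesis .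
qed

lemma cs_double:
  fixes a b :: "'i::finite \<Rightarrow> 'j::finite \<Rightarrow> complex"
  shows "(cmod (\<Sum>i\<in>UNIV. \<Sum>l\<in>UNIV. a i l * b i l))^2
     \<le> (\<Sum>i\<in>UNIV. \<Sum>l\<in>UNIV. (cmod (a i l))^2) * (\<Sum>i\<in>UNIV. \<Sum>l\<in>UNIV. (cmod (b i l))^2)"
  using cs_complex[of "\<lambda>p. a (fst p) (snd p)" "\<lambda>p. b (fst p) (snd p)" UNIV]
  by (simp add: sum_pair)

lemma antisym_bound:
  fixes \<Psi> :: "'n::finite \<Rightarrow> 'n \<Rightarrow> complex" and w :: "'n \<Rightarrow> complex"
  assumes anti: "\<And>i l. \<Psi> l i = - \<Psi> i l"
    and nrm: "(\<Sum>i\<in>UNIV. \<Sum>l\<in>UNIV. (cmod (\<Psi> i l))^2) = 1"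
  shows "(\<Sum>l\<in>UNIV. (cmod (\<Sum>i\<in>UNIV. w i * \<Psi> i l))^2) \<le> (\<Sum>i\<in>UNIV. (cmod (w i))^2) / 2"
proof -
  define u where "u l = (\<Sum>i\<in>UNIV. w i * \<Psi> i l)" for l
  define N where "N = (\<Sum>l\<in>UNIV. (cmod (u l))^2)"
  define B where "B = (\<Sum>i\<in>UNIV. (cmod (w i))^2)"
  define z where "z i l = cnj (u l) * w i" for i l
  define f where "f i l = w i * \<Psi> i l * w l" for i l
  have S0: "(\<Sum>l\<in>UNIV. u l * w l) = 0"
  proof -
    have X: "(\<Sum>l\<in>UNIV. u l * w l) = (\<Sum>l\<in>UNIV. \<Sum>i\<in>UNIV. f i l)"
      by (simp add: u_def f_def sum_distrib_right)
    have "(\<Sum>l\<in>UNIV. \<Sum>i\<in>UNIV. f i l) = (\<Sum>l\<in>UNIV. \<Sum>i\<in>UNIV. - f l i)"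
      unfolding f_def by (intro sum.cong refl) (subst anti, simp)
    also have "\<dots> = - (\<Sum>l\<in>UNIV. \<Sum>i\<in>UNIV. f l i)" by (simp add: sum_negf)
    also have "(\<Sum>l\<in>UNIV. \<Sum>i\<in>UNIV. f l i) = (\<Sum>l\<in>UNIV. \<Sum>i\<in>UNIV. f i l)" by (rule sum.swap)
    finally show ?thesis using X by simp
  qed
  have N0: "N \<ge> 0" by (simp add: N_def sum_nonneg)
  have B0: "B \<ge> 0" by (simp add: B_def sum_nonneg)
  have NE: "of_real N = (\<Sum>i\<in>UNIV. \<Sum>l\<in>UNIV. \<Psi> i l * z i l)"
  proof -
    have "of_real N = (\<Sum>l\<in>UNIV. cnj (u l) * u l)"
      by (simp add: N_def of_real_sum cnj_mult_self del: of_real_power)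
    also have "\<dots> = (\<Sum>l\<in>UNIV. \<Sum>i\<in>UNIV. \<Psi> i l * z i l)"
    proof (intro sum.cong refl)
      fix l
      have "cnj (u l) * u l = cnj (u l) * (\<Sum>i\<in>UNIV. w i * \<Psi> i l)" by (simp add: u_def)
      also have "\<dots> = (\<Sum>i\<in>UNIV. \<Psi> i l * z i l)" by (simp add: z_def sum_distrib_left mult_ac)
      finally show "cnj (u l) * u l = (\<Sum>i\<in>UNIV. \<Psi> i l * z i l)" .
    qed
    also have "\<dots> = (\<Sum>i\<in>UNIV. \<Sum>l\<in>UNIV. \<Psi> i l * z i l)" by (rule sum.swap)
    finally show ?thesis .
  qed
  have NE2: "of_real N = - (\<Sum>i\<in>UNIV. \<Sum>l\<in>UNIV. \<Psi> i l * z l i)"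
  proof -
    have "(\<Sum>i\<in>UNIV. \<Sum>l\<in>UNIV. \<Psi> i l * z i l) = (\<Sum>l\<in>UNIV. \<Sum>i\<in>UNIV. \<Psi> i l * z i l)"
      by (rule sum.swap)
    also have "\<dots> = (\<Sum>i\<in>UNIV. \<Sum>l\<in>UNIV. - (\<Psi> i l * z l i))"
      by (intro sum.cong refl) (subst anti, simp)
    also have "\<dots> = - (\<Sum>i\<in>UNIV. \<Sum>l\<in>UNIV. \<Psi> i l * z l i)" by (simp add: sum_negf)
    finally show ?thesis using NE by simp
  qed
  have twoN: "2 * of_real N = (\<Sum>i\<in>UNIV. \<Sum>l\<in>UNIV. \<Psi> i l * (z i l - z l i))"
    using NE NE2 by (simp add: right_diff_distrib sum_subtractf)
  have CS: "(cmod (2 * of_real N :: complex))^2 \<le> (\<Sum>i\<in>UNIV. \<Sum>l\<in>UNIV. (cmod (z i l - z l i))^2)"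
    using cs_double[of \<Psi> "\<lambda>i l. z i l - z l i"] nrm by (simp only: twoN)
  have D: "of_real (\<Sum>i\<in>UNIV. \<Sum>l\<in>UNIV. (cmod (z i l - z l i))^2) = (of_real (2 * N * B) :: complex)"
  proof -
    have "of_real (\<Sum>i\<in>UNIV. \<Sum>l\<in>UNIV. (cmod (z i l - z l i))^2)
      = (\<Sum>i\<in>UNIV. \<Sum>l\<in>UNIV. cnj (z i l - z l i) * (z i l - z l i))"
      by (simp add: of_real_sum cnj_mult_self del: of_real_power complex_cnj_diff)
    also have "\<dots> = (\<Sum>i\<in>UNIV. \<Sum>l\<in>UNIV. cnj (z i l) * z i l) + (\<Sum>i\<in>UNIV. \<Sum>l\<in>UNIV. cnj (z l i) * z l i)
       - (\<Sum>i\<in>UNIV. \<Sum>l\<in>UNIV. cnj (z i l) * z l i) - (\<Sum>i\<in>UNIV. \<Sum>l\<in>UNIV. cnj (z l i) * z i l)"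
      by (simp add: algebra_simps sum.distrib sum_subtractf)
    also have "(\<Sum>i\<in>UNIV. \<Sum>l\<in>UNIV. cnj (z l i) * z l i) = (\<Sum>i\<in>UNIV. \<Sum>l\<in>UNIV. cnj (z i l) * z i l)"
      by (rule sum.swap)
    also have "(\<Sum>i\<in>UNIV. \<Sum>l\<in>UNIV. cnj (z i l) * z i l) = of_real N * of_real B"
    proof -
      have e: "cnj (z i l) * z i l = of_real ((cmod (u l))^2) * of_real ((cmod (w i))^2)" for i l
      proof -
        have "cnj (z i l) * z i l = (cnj (u l) * u l) * (cnj (w i) * w i)" by (simp add: z_def mult_ac)
        then show ?thesis by (simp only: cnj_mult_self)
      qed
      have "of_real N * of_real B = (\<Sum>l\<in>UNIV. \<Sum>i\<in>UNIV. of_real ((cmod (u l))^2) * of_real ((cmod (w i))^2) :: complex)"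
        by (simp only: N_def B_def of_real_sum sum_product)
      also have "\<dots> = (\<Sum>i\<in>UNIV. \<Sum>l\<in>UNIV. of_real ((cmod (u l))^2) * of_real ((cmod (w i))^2))"
        by (rule sum.swap)
      finally show ?thesis by (simp only: e)
    qed
    also have "(\<Sum>i\<in>UNIV. \<Sum>l\<in>UNIV. cnj (z i l) * z l i) = (\<Sum>l\<in>UNIV. u l * w l) * cnj (\<Sum>i\<in>UNIV. u i * w i)"
      by (simp add: z_def sum_product mult_ac) (rule sum.swap)
    also have "(\<Sum>i\<in>UNIV. \<Sum>l\<in>UNIV. cnj (z l i) * z i l) = (\<Sum>i\<in>UNIV. u i * w i) * cnj (\<Sum>l\<in>UNIV. u l * w l)"
      by (simp add: z_def sum_product mult_ac)
    finally show ?thesis using S0 by simp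
  qed
  then have D': "(\<Sum>i\<in>UNIV. \<Sum>l\<in>UNIV. (cmod (z i l - z l i))^2) = 2 * N * B"
    using of_real_eq_iff by blast
  have "4 * N^2 \<le> 2 * N * B" using CS D' N0 by (simp add: norm_mult power_mult_distrib)
  then have "N \<le> B / 2"
    using N0 B0 by (cases "N = 0") (auto simp: power2_eq_square)
  then show ?thesis by (simp add: N_def B_def u_def)
qed



lemma swap_mv: "swap_op *v x = (\<chi> a. x $ prod.swap a)"
proof -
  have "\<And>a b. (if b = prod.swap a then 1 else 0) * x$b = (if b = prod.swap a then x$(prod.swap a) else 0)"
    by simp
  then show ?thesis by (simp add: swap_op_def matrix_vector_mult_def vec_eq_iff)
qed

lemma proj_sym_mv: "proj_sym *v x = (\<chi> a. (x$a + x$(prod.swap a))/2)"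
  by (simp add: proj_sym_def smat_mv matrix_vector_mult_add_rdistrib swap_mv vec_eq_iff)

lemma proj_antisym_mv: "proj_antisym *v x = (\<chi> a. (x$a - x$(prod.swap a))/2)"
  by (simp add: proj_antisym_def smat_mv matrix_vector_mult_diff_rdistrib swap_mv vec_eq_iff)

lemma antisym_iff: "antisymmetric_vec x \<longleftrightarrow> (\<forall>a. x$(prod.swap a) = - x$a)"
proof -
  have "\<And>a. ((x$a - x$(prod.swap a))/2 = x$a) \<longleftrightarrow> (x$(prod.swap a) = - x$a)"
    by (auto simp: field_simps) (simp add: eq_neg_iff_add_eq_0 add.commute)
  then show ?thesis by (simp add: antisymmetric_vec_def proj_antisym_mv vec_eq_iff)
qed

lemma antisym_P:
  assumes "antisymmetric_vec x" shows "proj_sym *v x = 0"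
proof -
  have h: "x$(prod.swap a) = - x$a" for a using assms antisym_iff by blast
  show ?thesis unfolding proj_sym_mv vec_eq_iff
  proof
    fix a
    show "(\<chi> a. (x$a + x$(prod.swap a))/2) $ a = 0 $ a"
      by (simp only: vec_lambda_beta h zero_index) simp
  qed
qed

lemma sum_swap: "(\<Sum>a\<in>UNIV. f (prod.swap a)) = (\<Sum>a\<in>(UNIV::('a::finite\<times>'a) set). f a)"
  by (rule sum.reindex_bij_witness[of _ prod.swap prod.swap]) auto

lemma trace_add': "trace (A + B) = trace A + trace (B::complex^'m::finite^'m)"
  by (simp add: trace_def sum.distrib)
lemma trace_smat: "trace (smat c A) = c * trace A"
  by (simp add: trace_def smat_def sum_distrib_left)
lemma trace_ketbra: "trace (ketbra u) = ip u u"
  by (simp add: trace_def ketbra_def ip_def mult.commute)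

lemma conj_absorb_eq: "(i = j \<and> j = i) = (i = j)" by auto

lemma trace_proj_sym: "trace (proj_sym :: complex^('n::finite\<times>'n)^('n\<times>'n)) = of_real (dim_sym TYPE('n))"
proof -
  have "trace (proj_sym :: complex^('n\<times>'n)^('n\<times>'n)) = (\<Sum>i\<in>(UNIV::'n set). \<Sum>j\<in>(UNIV::'n set). (1 + (if i = j then 1 else 0)) / 2)"
    by (simp add: trace_def proj_sym_def smat_def swap_op_def mat_def sum_pair conj_absorb_eq)
  also have "\<dots> = (of_nat (CARD('n) * CARD('n)) + of_nat CARD('n)) / 2"
    by (simp add: sum.distrib add_divide_distrib flip: sum_divide_distrib) (simp add: distrib_left)
  also have "\<dots> = of_real (dim_sym TYPE('n))"
    unfolding dim_sym_def of_real_divide of_real_mult of_real_add of_real_of_nat_eq of_real_1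
    by (simp add: algebra_simps add_divide_distrib)
  finally show ?thesis .
qed

lemma sq_P_self: "sq proj_sym v v = ip (proj_sym *v v) (proj_sym *v v)"
proof -
  define S where "S = (\<Sum>a\<in>UNIV. cnj (v$a) * v$(prod.swap a))"
  have e1: "sq proj_sym v v = (ip v v + S) / 2"
    by (simp add: sq_def proj_sym_mv ip_def S_def distrib_left sum.distrib add_divide_distrib flip: sum_divide_distrib)
  have "ip (proj_sym *v v) (proj_sym *v v) = (\<Sum>a\<in>UNIV. cnj (v$a) * v$a + cnj (v$(prod.swap a)) * v$(prod.swap a)
        + cnj (v$a) * v$(prod.swap a) + cnj (v$(prod.swap a)) * v$a) / 4"
    by (simp add: ip_def proj_sym_mv sum_divide_distrib algebra_simps)
  also have "\<dots> = (ip v v + ip v v + S + S) / 4"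
    using sum_swap[of "\<lambda>a. cnj (v$a) * v$a"] sum_swap[of "\<lambda>a. cnj (v$(prod.swap a)) * v$a"]
    by (simp add: sum.distrib ip_def S_def)
  also have "\<dots> = (ip v v + S) / 2" by (simp add: field_simps)
  finally show ?thesis unfolding e1 by (rule sym)
qed

lemma psd_P: "psd proj_sym"
  unfolding psd_sq sq_P_self ip_self by (simp add: sum_nonneg)

lemma pt_add: "partial_transpose (A + B) = partial_transpose A + partial_transpose B"
  by (simp add: partial_transpose_def vec_eq_iff)
lemma pt_smat: "partial_transpose (smat c A) = smat c (partial_transpose A)"
  by (simp add: partial_transpose_def smat_def vec_eq_iff)



lemma norm1_sum: "norm (\<psi>::complex^'m::finite) = 1 \<Longrightarrow> (\<Sum>a\<in>UNIV. (cmod (\<psi>$a))^2) = 1"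
  by (simp add: norm_vec_def L2_set_def)

lemma re_bound: "-((cmod a)^2 + (cmod b)^2)/2 \<le> Re (a * cnj b)"
proof -
  have "- cmod (a * cnj b) \<le> Re (a * cnj b)" using abs_Re_le_cmod[of "a * cnj b"] by linarith
  moreover have "cmod (a * cnj b) = cmod a * cmod b" by (simp add: norm_mult)
  moreover have "0 \<le> (cmod a - cmod b)^2" by simp
  then have "cmod a * cmod b \<le> ((cmod a)^2 + (cmod b)^2)/2" by (simp add: power2_eq_square algebra_simps)
  ultimately show ?thesis by linarith
qed

lemma sq_PTK:
  fixes \<psi> v :: "complex^('n::finite\<times>'n)"
  shows "sq (partial_transpose (ketbra \<psi>)) v v =
    (\<Sum>j\<in>UNIV. \<Sum>l\<in>UNIV. (\<Sum>i\<in>UNIV. cnj (v$(i,j)) * \<psi>$(i,l)) * cnj (\<Sum>i\<in>UNIV. cnj (v$(i,l)) * \<psi>$(i,j)))"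
proof -
  define T where "T i j k l = cnj (v$(i,j)) * (\<psi>$(i,l) * cnj (\<psi>$(k,j)) * v$(k,l))" for i j k l
  have "sq (partial_transpose (ketbra \<psi>)) v v = (\<Sum>i\<in>UNIV. \<Sum>j\<in>UNIV. \<Sum>k\<in>UNIV. \<Sum>l\<in>UNIV. T i j k l)"
    by (simp add: sq_def ip_def matrix_vector_mult_def partial_transpose_def ketbra_def sum_pair sum_distrib_left T_def)
  also have "\<dots> = (\<Sum>j\<in>UNIV. \<Sum>i\<in>UNIV. \<Sum>k\<in>UNIV. \<Sum>l\<in>UNIV. T i j k l)"
    by (rule sum.swap)
  also have "\<dots> = (\<Sum>j\<in>UNIV. \<Sum>i\<in>UNIV. \<Sum>l\<in>UNIV. \<Sum>k\<in>UNIV. T i j k l)"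
    by (rule sum.cong[OF refl], rule sum.cong[OF refl], rule sum.swap)
  also have "\<dots> = (\<Sum>j\<in>UNIV. \<Sum>l\<in>UNIV. \<Sum>i\<in>UNIV. \<Sum>k\<in>UNIV. T i j k l)"
    by (rule sum.cong[OF refl], rule sum.swap)
  also have "\<dots> = (\<Sum>j\<in>UNIV. \<Sum>l\<in>UNIV. (\<Sum>i\<in>UNIV. cnj (v$(i,j)) * \<psi>$(i,l)) * cnj (\<Sum>i\<in>UNIV. cnj (v$(i,l)) * \<psi>$(i,j)))"
    by (simp add: T_def sum_product mult_ac)
  finally show ?thesis .
qed

lemma sq_PTK_bounds:
  fixes \<psi> v :: "complex^('n::finite\<times>'n)"
  assumes "norm \<psi> = 1" "antisymmetric_vec \<psi>"
  shows "Im (sq (partial_transpose (ketbra \<psi>)) v v) = 0"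
    and "- (\<Sum>a\<in>UNIV. (cmod (v$a))^2) / 2 \<le> Re (sq (partial_transpose (ketbra \<psi>)) v v)"
proof -
  define C where "C j l = (\<Sum>i\<in>UNIV. cnj (v$(i,j)) * \<psi>$(i,l))" for j l
  define X where "X = (\<Sum>j\<in>UNIV. \<Sum>l\<in>UNIV. C j l * cnj (C l j))"
  have X: "sq (partial_transpose (ketbra \<psi>)) v v = X"
    unfolding X_def C_def by (rule sq_PTK)
  have "cnj X = (\<Sum>j\<in>UNIV. \<Sum>l\<in>UNIV. cnj (C j l) * C l j)" by (simp add: X_def)
  also have "\<dots> = (\<Sum>l\<in>UNIV. \<Sum>j\<in>UNIV. cnj (C j l) * C l j)" by (rule sum.swap)
  also have "\<dots> = X" by (simp add: X_def mult.commute)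
  finally have "cnj X = X" .
  then have "Im (cnj X) = Im X" by simp
  then show "Im (sq (partial_transpose (ketbra \<psi>)) v v) = 0" using X by simp
  have anti: "\<psi>$(l,i) = - \<psi>$(i,l)" for i l
  proof -
    have "\<psi>$(prod.swap (i,l)) = - \<psi>$(i,l)" using assms(2) antisym_iff by blast
    then show ?thesis by simp
  qed
  have nrm: "(\<Sum>i\<in>UNIV. \<Sum>l\<in>UNIV. (cmod (\<psi>$(i,l)))^2) = 1"
    using norm1_sum[OF assms(1)] by (simp add: sum_pair)
  have rowb: "(\<Sum>l\<in>UNIV. (cmod (C j l))^2) \<le> (\<Sum>i\<in>UNIV. (cmod (v$(i,j)))^2) / 2" for j
    using antisym_bound[of "\<lambda>i l. \<psi>$(i,l)" "\<lambda>i. cnj (v$(i,j))", OF anti nrm]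
    by (simp add: C_def)
  have "Re X = (\<Sum>j\<in>UNIV. \<Sum>l\<in>UNIV. Re (C j l * cnj (C l j)))" by (simp add: X_def)
  also have "\<dots> \<ge> (\<Sum>j\<in>UNIV. \<Sum>l\<in>UNIV. -((cmod (C j l))^2 + (cmod (C l j))^2)/2)"
    by (intro sum_mono re_bound)
  finally have r1: "(\<Sum>j\<in>UNIV. \<Sum>l\<in>UNIV. -((cmod (C j l))^2 + (cmod (C l j))^2)/2) \<le> Re X" .
  have "(\<Sum>j\<in>UNIV. \<Sum>l\<in>UNIV. -((cmod (C j l))^2 + (cmod (C l j))^2)/2)
      = - ((\<Sum>j\<in>UNIV. \<Sum>l\<in>UNIV. (cmod (C j l))^2) + (\<Sum>j\<in>UNIV. \<Sum>l\<in>UNIV. (cmod (C l j))^2)) / 2"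
    by (simp add: sum.distrib sum_negf sum_subtractf add_divide_distrib flip: sum_divide_distrib)
  also have "(\<Sum>j\<in>UNIV. \<Sum>l\<in>UNIV. (cmod (C l j))^2) = (\<Sum>j\<in>UNIV. \<Sum>l\<in>UNIV. (cmod (C j l))^2)"
    by (rule sum.swap)
  finally have r2: "- (\<Sum>j\<in>UNIV. \<Sum>l\<in>UNIV. (cmod (C j l))^2) \<le> Re X" using r1 by simp
  have "(\<Sum>j\<in>UNIV. \<Sum>l\<in>UNIV. (cmod (C j l))^2) \<le> (\<Sum>j\<in>UNIV. (\<Sum>i\<in>UNIV. (cmod (v$(i,j)))^2) / 2)"
    by (rule sum_mono[OF rowb])
  also have "\<dots> = (\<Sum>j\<in>UNIV. \<Sum>i\<in>UNIV. (cmod (v$(i,j)))^2) / 2"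
    by (simp add: sum_divide_distrib)
  also have "(\<Sum>j\<in>UNIV. \<Sum>i\<in>UNIV. (cmod (v$(i,j)))^2) = (\<Sum>i\<in>UNIV. \<Sum>j\<in>UNIV. (cmod (v$(i,j)))^2)"
    by (rule sum.swap)
  also have "\<dots> = (\<Sum>a\<in>UNIV. (cmod (v$a))^2)"
    by (simp add: sum_pair)
  finally show "- (\<Sum>a\<in>UNIV. (cmod (v$a))^2) / 2 \<le> Re (sq (partial_transpose (ketbra \<psi>)) v v)"
    using r2 X by simp
qed

definition phiv :: "complex^('n::finite\<times>'n)" where
  "phiv = (\<chi> a. if fst a = snd a then 1 else 0)"

lemma pt_proj_sym: "partial_transpose (proj_sym :: complex^('n::finite\<times>'n)^('n\<times>'n)) = smat (1/2) (mat 1 + ketbra phiv)"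
  by (auto simp: vec_eq_iff partial_transpose_def proj_sym_def smat_def mat_def swap_op_def ketbra_def phiv_def)

lemma sq_mat1: "sq (mat 1) x y = ip x y"
  by (simp add: sq_def matrix_vector_mul_lid)

lemma sq_PTP: "sq (partial_transpose (proj_sym :: complex^('n::finite\<times>'n)^('n\<times>'n))) v v
   = (ip v v + of_real ((cmod (ip phiv v))^2)) / 2"
  by (simp add: pt_proj_sym sq_smat sq_mat_add sq_ketbra_self sq_mat1 del: of_real_power)



definition tp :: "complex^'n::finite \<Rightarrow> complex^'n \<Rightarrow> complex^('n\<times>'n)" where
  "tp x y = (\<chi> a. x$(fst a) * y$(snd a))"

lemma antisym_diff:
  assumes "antisymmetric_vec a" "antisymmetric_vec b"
  shows "antisymmetric_vec (a - c *s b)"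
proof -
  have ha: "a$(prod.swap z) = - a$z" for z using assms(1) antisym_iff by blast
  have hb: "b$(prod.swap z) = - b$z" for z using assms(2) antisym_iff by blast
  show ?thesis unfolding antisym_iff by (simp add: ha hb)
qed

lemma ip_antisym_proj:
  fixes u w :: "complex^('n::finite\<times>'n)"
  assumes "antisymmetric_vec w"
  shows "ip (proj_antisym *v u) w = ip u w"
proof -
  have h: "w$(prod.swap a) = - w$a" for a using assms antisym_iff by blast
  have "(\<Sum>a\<in>UNIV. cnj (u$(prod.swap a)) * w$a) = (\<Sum>a\<in>UNIV. cnj (u$(prod.swap (prod.swap a))) * w$(prod.swap a))"
    by (rule sum_swap[symmetric])
  also have "\<dots> = - ip u w" by (simp add: h ip_def sum_negf)
  finally have e: "(\<Sum>a\<in>UNIV. cnj (u$(prod.swap a)) * w$a) = - ip u w" .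
  have "ip (proj_antisym *v u) w = ((\<Sum>a\<in>UNIV. cnj (u$a) * w$a) - (\<Sum>a\<in>UNIV. cnj (u$(prod.swap a)) * w$a)) / 2"
    by (simp add: ip_def proj_antisym_mv diff_divide_distrib left_diff_distrib sum_subtractf flip: sum_divide_distrib)
  also have "\<dots> = ip u w" using e by (simp add: ip_def)
  finally show ?thesis .
qed

lemma antisym_proj_antisym: "antisymmetric_vec (proj_antisym *v u)"
  unfolding antisym_iff proj_antisym_mv by (auto simp: diff_divide_distrib)

lemma rank_le2:
  fixes x y :: "complex^'n::finite" and c :: complex
  shows "rank (\<chi> i j. c * (x$i * y$j - x$j * y$i) :: complex^'n^'n) \<le> 2"
proof -
  let ?M = "(\<chi> i j. c * (x$i * y$j - x$j * y$i) :: complex^'n^'n)"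
  have "rows ?M \<subseteq> vec.span {x, y}"
  proof
    fix r assume "r \<in> rows ?M"
    then obtain i where r: "r = row i ?M" by (auto simp: rows_def)
    have "r = (c * x$i) *s y - (c * y$i) *s x"
      by (simp add: r row_def vec_eq_iff algebra_simps)
    also have "\<dots> \<in> vec.span {x, y}"
      by (intro vec.span_diff vec.span_scale vec.span_base) auto
    finally show "r \<in> vec.span {x, y}" .
  qed
  then have "vec.dim (rows ?M) \<le> card {x, y}" by (rule vec.dim_le_card) simp
  also have "card {x, y} \<le> 2" by (cases "x = y") auto
  finally show ?thesis by (simp add: row_rank_def_gen)
qed

lemma product_orth:
  fixes \<psi> :: "complex^('n::finite\<times>'n)" and x y :: "complex^'n"
  assumes anti: "antisymmetric_vec \<psi>" and nrm: "norm \<psi> = 1" and sr: "schmidt_rank \<psi> > 2"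
    and orth: "\<forall>w. antisymmetric_vec w \<and> ip \<psi> w = 0 \<longrightarrow> ip (tp x y) w = 0"
  shows "ip (tp x y) \<psi> = 0"
proof -
  define u where "u = tp x y"
  define v where "v = proj_antisym *v u"
  define c where "c = ip \<psi> v"
  define w0 where "w0 = v - c *s \<psi>"
  have ipp: "ip \<psi> \<psi> = 1" using norm1_sum[OF nrm] by (simp add: ip_self)
  have av: "antisymmetric_vec v" unfolding v_def by (rule antisym_proj_antisym)
  have a0: "antisymmetric_vec w0" unfolding w0_def by (rule antisym_diff[OF av anti])
  have o0: "ip \<psi> w0 = 0" by (simp add: w0_def ip_diff_right ip_scale_right ipp c_def)
  have "ip u w0 = 0" using orth a0 o0 by (simp add: u_def)
  then have "ip v w0 = 0" using ip_antisym_proj[OF a0, of u] by (simp add: v_def)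
  moreover have "ip w0 w0 = ip v w0 - cnj c * ip \<psi> w0"
    using ip_diff_left[of v "c *s \<psi>" w0] ip_scale_left[of c \<psi> w0] by (simp add: w0_def)
  ultimately have "ip w0 w0 = 0" using o0 by simp
  then have "w0 = 0" by (simp add: ip_self_eq_0)
  then have vc: "v = c *s \<psi>" by (simp add: w0_def)
  have "ip u \<psi> = ip v \<psi>" using ip_antisym_proj[OF anti, of u] by (simp add: v_def)
  also have "\<dots> = cnj c" by (simp add: vc ip_scale_left ipp)
  finally have iu: "ip u \<psi> = cnj c" .
  show ?thesis
  proof (rule ccontr)
    assume "ip (tp x y) \<psi> \<noteq> 0"
    then have c0: "c \<noteq> 0" using iu u_def by simp
    have eq: "(\<chi> i j. \<psi>$(i,j) :: complex^'n^'n) = (\<chi> i j. (1/(2*c)) * (x$i * y$j - x$j * y$i))"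
    proof -
      have "\<psi>$(i,j) = (1/(2*c)) * (x$i * y$j - x$j * y$i)" for i j
      proof -
        have "v$(i,j) = c * \<psi>$(i,j)" using vc by simp
        moreover have "v$(i,j) = (x$i * y$j - x$j * y$i) / 2"
          by (simp add: v_def u_def proj_antisym_mv tp_def)
        ultimately show ?thesis using c0 by (simp add: field_simps)
      qed
      then show ?thesis by (simp add: vec_eq_iff)
    qed
    have "schmidt_rank \<psi> \<le> 2" unfolding schmidt_rank_def eq by (rule rank_le2)
    then show False using sr by simp
  qed
qed



lemma tensor_sum_ketbra:
  fixes f :: "'i::finite \<Rightarrow> complex^'n::finite" and g :: "'j::finite \<Rightarrow> complex^'n"
  shows "tensor_op (\<Sum>i\<in>UNIV. ketbra (f i)) (\<Sum>j\<in>UNIV. ketbra (g j)) = (\<Sum>i\<in>UNIV. \<Sum>j\<in>UNIV. ketbra (tp (f i) (g j)))"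
  by (simp add: vec_eq_iff tensor_op_def ketbra_def tp_def sum_product mult_ac)

lemma dsum_zero:
  fixes f :: "'i::finite \<Rightarrow> 'j::finite \<Rightarrow> real"
  assumes "\<And>i j. 0 \<le> f i j" "(\<Sum>i\<in>UNIV. \<Sum>j\<in>UNIV. f i j) = 0"
  shows "f i j = 0"
proof -
  have "\<forall>i\<in>UNIV. (\<Sum>j\<in>UNIV. f i j) = 0" using assms by (subst sum_nonneg_eq_0_iff[symmetric]) (auto intro: sum_nonneg)
  then have "(\<Sum>j\<in>UNIV. f i j) = 0" by blast
  then show ?thesis using assms(1) by (simp add: sum_nonneg_eq_0_iff)
qed

lemma dsum_nonzero:
  fixes f :: "'i \<Rightarrow> 'j \<Rightarrow> real"
  assumes "(\<Sum>i\<in>I. \<Sum>j\<in>J. f i j) \<noteq> 0"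
  shows "\<exists>i j. f i j \<noteq> 0"
proof (rule ccontr)
  assume "\<not> ?thesis"
  then have "\<forall>i j. f i j = 0" by blast
  then show False using assms by simp
qed

lemma sum_nonzero:
  fixes f :: "nat \<Rightarrow> real"
  assumes "(\<Sum>k<m. f k) \<noteq> 0"
  shows "\<exists>k<m. f k \<noteq> 0"
proof (rule ccontr)
  assume "\<not> ?thesis"
  then have "\<forall>k\<in>{..<m}. f k = 0" by blast
  then show False using assms by simp
qed



theorem mainTheorem4:
  fixes \<psi> :: "complex^('n::finite \<times> 'n)" and p :: real
  assumes "norm \<psi> = 1"
    and "antisymmetric_vec \<psi>"
    and "schmidt_rank \<psi> > 2"
    and "0 < p" and "p \<le> 1 / (dim_sym TYPE('n) + 1)"
  shows "PPT (smat (complex_of_real p) (ketbra \<psi>)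
              + smat (complex_of_real ((1 - p) / dim_sym TYPE('n))) proj_sym)
       \<and> entangled (smat (complex_of_real p) (ketbra \<psi>)
              + smat (complex_of_real ((1 - p) / dim_sym TYPE('n))) proj_sym)"
proof -
  define D where "D = dim_sym TYPE('n)"
  define q where "q = (1 - p) / D"
  define K where "K = (ketbra \<psi> :: complex^('n\<times>'n)^('n\<times>'n))"
  define P where "P = (proj_sym :: complex^('n\<times>'n)^('n\<times>'n))"
  define \<sigma> where "\<sigma> = smat (of_real p) K + smat (of_real q) P"
  have cpos: "0 < real CARD('n)" by simp
  have dpos: "D > 0" unfolding D_def dim_sym_def using cpos by (simp add: add_pos_pos)
  have p1: "p * (D + 1) \<le> 1" using assms(5) dpos unfolding D_def[symmetric] by (simp add: le_divide_eq)
  have qp: "p \<le> q" using p1 dpos by (simp add: q_def le_divide_eq algebra_simps)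
  have q0: "0 \<le> q" using qp assms(4) by simp
  have qD: "q * D = 1 - p" using dpos by (simp add: q_def)
  have ipp: "ip \<psi> \<psi> = 1" using norm1_sum[OF assms(1)] by (simp add: ip_self)
  have sqs: "sq \<sigma> x y = of_real p * sq K x y + of_real q * sq P x y" for x y
    by (simp add: \<sigma>_def sq_mat_add sq_smat)
  have ppt: "PPT \<sigma>"
    unfolding PPT_def psd_sq
  proof
    fix v :: "complex^('n\<times>'n)"
    define N where "N = (\<Sum>a\<in>UNIV. (cmod (v$a))^2)"
    have N0: "0 \<le> N" by (simp add: N_def sum_nonneg)
    define X where "X = sq (partial_transpose K) v v"
    have e: "sq (partial_transpose \<sigma>) v v = of_real p * X + of_real q * sq (partial_transpose P) v v"
      by (simp add: \<sigma>_def pt_add pt_smat sq_mat_add sq_smat X_def)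
    have X1: "Im X = 0" and X2: "- N / 2 \<le> Re X"
      using sq_PTK_bounds[OF assms(1,2), of v] by (simp_all add: X_def K_def N_def)
    define Y where "Y = (N + (cmod (ip phiv v))^2) / 2"
    have Yd: "sq (partial_transpose P) v v = of_real Y"
      by (simp add: P_def sq_PTP ip_self N_def Y_def del: of_real_power)
    have "p * (- N / 2) \<le> p * Re X" using X2 assms(4) by (intro mult_left_mono) auto
    moreover have "q * (N / 2) \<le> q * Y" using q0 by (intro mult_left_mono) (auto simp: Y_def)
    moreover have "p * (N / 2) \<le> q * (N / 2)" using qp N0 by (intro mult_right_mono) auto
    ultimately have "0 \<le> p * Re X + q * Y" by linarith
    then show "Im (sq (partial_transpose \<sigma>) v v) = 0 \<and> 0 \<le> Re (sq (partial_transpose \<sigma>) v v)"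
      using X1 by (simp add: e Yd)
  qed
  have psdP: "\<And>v. sq P v v = of_real (\<Sum>a\<in>UNIV. (cmod ((proj_sym *v v)$a))^2)"
    by (simp add: P_def sq_P_self ip_self)
  have psds: "psd \<sigma>"
    unfolding psd_sq
  proof
    fix v :: "complex^('n\<times>'n)"
    have "sq \<sigma> v v = of_real (p * (cmod (ip \<psi> v))^2 + q * (\<Sum>a\<in>UNIV. (cmod ((proj_sym *v v)$a))^2))"
      by (simp add: sqs psdP K_def sq_ketbra_self del: of_real_power)
    moreover have "0 \<le> p * (cmod (ip \<psi> v))^2 + q * (\<Sum>a\<in>UNIV. (cmod ((proj_sym *v v)$a))^2)"
      using assms(4) q0 by (intro add_nonneg_nonneg mult_nonneg_nonneg sum_nonneg) auto
    ultimately show "Im (sq \<sigma> v v) = 0 \<and> 0 \<le> Re (sq \<sigma> v v)" by simp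
  qed
  have trs: "trace \<sigma> = 1"
  proof -
    have "trace \<sigma> = of_real p * ip \<psi> \<psi> + of_real q * of_real D"
      by (simp add: \<sigma>_def trace_add' trace_smat K_def trace_ketbra P_def trace_proj_sym D_def)
    also have "\<dots> = of_real (p + q * D)" by (simp add: ipp)
    also have "\<dots> = 1" by (simp add: qD)
    finally show ?thesis .
  qed
  have nsep: "\<not> separable \<sigma>"
  proof
    assume "separable \<sigma>"
    then obtain m :: nat and w :: "nat \<Rightarrow> real" and R T where H: "(\<forall>k<m. 0 \<le> w k \<and> density (R k) \<and> density (T k)) \<and> (\<Sum>k<m. w k) = 1 \<and>
      \<sigma> = (\<Sum>k<m. smat (complex_of_real (w k)) (tensor_op (R k) (T k)))"
      unfolding separable_def by (elim exE) (rule that)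
    from H have wR: "\<forall>k<m. 0 \<le> w k \<and> density (R k) \<and> density (T k)" by (rule conjunct1)
    from H have \<sigma>e: "\<sigma> = (\<Sum>k<m. smat (complex_of_real (w k)) (tensor_op (R k) (T k)))"
      by (rule conjunct2[OF conjunct2])
    have "\<forall>k. \<exists>f. k < m \<longrightarrow> R k = (\<Sum>i\<in>(UNIV::'n set). ketbra (f i))"
    proof
      fix k
      show "\<exists>f. k < m \<longrightarrow> R k = (\<Sum>i\<in>(UNIV::'n set). ketbra (f i))"
      proof (cases "k < m")
        case True
        then have "psd (R k)" using wR density_def by blast
        then obtain f where "R k = (\<Sum>i\<in>(UNIV::'n set). ketbra (f i))" using psd_decomp by blast
        then show ?thesis by blast
      qed simp
    qed
    from choice[OF this] obtain F where F: "\<forall>k. k < m \<longrightarrow> R k = (\<Sum>i\<in>(UNIV::'n set). ketbra (F k i))"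
      by blast
    have "\<forall>k. \<exists>f. k < m \<longrightarrow> T k = (\<Sum>i\<in>(UNIV::'n set). ketbra (f i))"
    proof
      fix k
      show "\<exists>f. k < m \<longrightarrow> T k = (\<Sum>i\<in>(UNIV::'n set). ketbra (f i))"
      proof (cases "k < m")
        case True
        then have "psd (T k)" using wR density_def by blast
        then obtain f where "T k = (\<Sum>i\<in>(UNIV::'n set). ketbra (f i))" using psd_decomp by blast
        then show ?thesis by blast
      qed simp
    qed
    from choice[OF this] obtain G where G: "\<forall>k. k < m \<longrightarrow> T k = (\<Sum>i\<in>(UNIV::'n set). ketbra (G k i))"
      by blast
    define val where "val k i j z = (cmod (ip (tp (F k i) (G k j)) z))^2" for k i j z
    define tot where "tot k z = w k * (\<Sum>i\<in>(UNIV::'n set). \<Sum>j\<in>(UNIV::'n set). val k i j z)" for k z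
    have \<sigma>2: "\<sigma> = (\<Sum>k<m. smat (of_real (w k)) (\<Sum>i\<in>(UNIV::'n set). \<Sum>j\<in>(UNIV::'n set). ketbra (tp (F k i) (G k j))))"
      unfolding \<sigma>e using F G by (intro sum.cong refl) (simp add: tensor_sum_ketbra)
    have sqform: "sq \<sigma> z z = of_real (\<Sum>k<m. tot k z)" for z
      by (subst \<sigma>2) (simp add: sq_mat_sum sq_smat sq_ketbra_self tot_def val_def sum_distrib_left del: of_real_power)
    have valnn: "0 \<le> val k i j z" for k i j z by (simp add: val_def)
    have totnn: "k < m \<Longrightarrow> 0 \<le> tot k z" for k z
      using wR by (simp add: tot_def valnn sum_nonneg)
    have zero: "tot k z = 0" if "k < m" "antisymmetric_vec z" "ip \<psi> z = 0" for k z
    proof -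
      have sP: "sq P z z = 0" using that(2) by (simp add: P_def sq_def antisym_P)
      have "sq \<sigma> z z = 0"
        using that sP by (simp add: sqs K_def sq_ketbra_self)
      then have "(\<Sum>k<m. tot k z) = 0" using sqform[of _] by (simp del: of_real_sum)
      then have "\<forall>k\<in>{..<m}. tot k z = 0" using totnn by (subst sum_nonneg_eq_0_iff[symmetric]) auto
      then show ?thesis using that by simp
    qed
    have sPp: "sq P \<psi> \<psi> = 0" using assms(2) by (simp add: P_def sq_def antisym_P)
    have "sq \<sigma> \<psi> \<psi> = of_real p"
      using sPp by (simp add: sqs K_def sq_ketbra_self ipp)
    then have "(\<Sum>k<m. tot k \<psi>) = p" using sqform[of _] by (simp del: of_real_sum)
    then have "(\<Sum>k<m. tot k \<psi>) \<noteq> 0" using assms(4) by simp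
    then obtain k where km: "k < m" and tk: "tot k \<psi> \<noteq> 0" using sum_nonzero by blast
    then have wk: "w k \<noteq> 0" and "(\<Sum>i\<in>(UNIV::'n set). \<Sum>j\<in>(UNIV::'n set). val k i j \<psi>) \<noteq> 0"
      by (auto simp: tot_def)
    then obtain i j where vij: "val k i j \<psi> \<noteq> 0" using dsum_nonzero[of "\<lambda>i j. val k i j \<psi>" UNIV UNIV] by blast
    have orth: "\<forall>z. antisymmetric_vec z \<and> ip \<psi> z = 0 \<longrightarrow> ip (tp (F k i) (G k j)) z = 0"
    proof (intro allI impI, elim conjE)
      fix z assume z: "antisymmetric_vec z" "ip \<psi> z = 0"
      have "tot k z = 0" using zero[OF km z] .
      then have "(\<Sum>i\<in>(UNIV::'n set). \<Sum>j\<in>(UNIV::'n set). val k i j z) = 0" using wk by (simp add: tot_def)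
      then have "val k i j z = 0" using dsum_zero[of "\<lambda>i j. val k i j z"] valnn by blast
      then show "ip (tp (F k i) (G k j)) z = 0" by (simp add: val_def)
    qed
    have "ip (tp (F k i) (G k j)) \<psi> = 0" by (rule product_orth[OF assms(2) assms(1) assms(3) orth])
    then show False using vij by (simp add: val_def)
  qed
  have "PPT \<sigma> \<and> entangled \<sigma>"
    using ppt psds trs nsep by (simp add: entangled_def density_def)
  then show ?thesis by (simp add: \<sigma>_def K_def P_def q_def D_def)
qed

end
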